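(* Let $C_1$ be a positive squarefree integer and $q$ a prime. Let $(x, y, \alpha, p)$ be a solution in integers to \[ C_1x^2 + q^\alpha = y^p, \quad \gcd(C_1x, q, y) = 1, \quad x, y > 0, \quad \alpha > 0, \] with $y$ even and $p \ge 11$ prime. Let $\ell$ be a prime with $\ell = 2mp + 1$ for some integer $m > 0$ and $\ell \nmid 2qC_1y$. Let $\beta$ be the unique integer in $\{0, 1, \dots, 2p-1\}$ with $\beta \equiv \alpha \pmod{2p}$. Then there exists $\omega \in \{0, 1, \dots, \ell-1\}$ with \[ (C_1\omega^2 + q^\beta)^{2m} \equiv 1 \pmod \ell \] such that the reduction of $F_{x,\alpha}$ over $\mathbb{F}_\ell$ is either isomorphic to the curve \[ F_{\omega,\beta}/\mathbb{F}_\ell: Y^2 + XY = X^3 + \frac{C_1\omega - 1}{4}X^2 + \frac{C_1^2\omega^2 + C_1q^\beta}{64}X \] or to its quadratic twist by $q \bmod \ell$.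
   Context: $F_{x,\alpha}$ is the elliptic curve over $\mathbb{Q}$ given by $Y^2 + XY = X^3 + \frac{C_1x-1}{4}X^2 + \frac{C_1^2x^2 + C_1q^\alpha}{64}X$. Coefficients of $F_{\omega,\beta}$ are interpreted in $\mathbb{F}_\ell$ (division by $4$ and $64$ being inversion modulo the odd prime $\ell$). *)

theory Defs
  imports "HOL-Number_Theory.Number_Theory" "HOL-Computational_Algebra.Squarefree"
begin

text \<open>A generalized Weierstrass equation
  Y^2 + a1 XY + a3 Y = X^3 + a2 X^2 + a4 X + a6 is recorded by its
  coefficient tuple (a1, a2, a3, a4, a6).\<close>

type_synonym 'a weq = "'a \<times> 'a \<times> 'a \<times> 'a \<times> 'a"

definition rat_red :: "int \<Rightarrow> rat \<Rightarrow> int" where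
  "rat_red l r = (fst (quotient_of r) * modular_inverse l (snd (quotient_of r))) mod l"

definition weq_red :: "int \<Rightarrow> rat weq \<Rightarrow> int weq" where
  "weq_red l E = (case E of (a1, a2, a3, a4, a6) \<Rightarrow>
     (rat_red l a1, rat_red l a2, rat_red l a3, rat_red l a4, rat_red l a6))"

definition F_curve :: "int \<Rightarrow> int \<Rightarrow> int \<Rightarrow> nat \<Rightarrow> rat weq" where
  "F_curve C1 q x \<alpha> =
     (1, (of_int C1 * of_int x - 1) / 4, 0,
      (of_int C1 ^ 2 * of_int x ^ 2 + of_int C1 * of_int q ^ \<alpha>) / 64, 0)"

text \<open>Isomorphism over F_l of Weierstrass equations with coefficients in Z/lZ
  (represented by integers): an admissible change of variables
  X = u^2 X' + r, Y = u^3 Y' + s u^2 X' + t with u a unit (Silverman, Table 3.1).\<close>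
definition weq_iso :: "int \<Rightarrow> int weq \<Rightarrow> int weq \<Rightarrow> bool" where
  "weq_iso l E E' = (case E of (a1, a2, a3, a4, a6) \<Rightarrow> case E' of (b1, b2, b3, b4, b6) \<Rightarrow>
     (\<exists>u r s t. \<not> l dvd u \<and>
        [u * b1 = a1 + 2 * s] (mod l) \<and>
        [u ^ 2 * b2 = a2 - s * a1 + 3 * r - s ^ 2] (mod l) \<and>
        [u ^ 3 * b3 = a3 + r * a1 + 2 * t] (mod l) \<and>
        [u ^ 4 * b4 = a4 - s * a3 + 2 * r * a2 - (t + r * s) * a1 + 3 * r ^ 2 - 2 * s * t] (mod l) \<and>
        [u ^ 6 * b6 = a6 + r * a4 + r ^ 2 * a2 + r ^ 3 - t * a3 - t ^ 2 - r * t * a1] (mod l)))"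

text \<open>Quadratic twist by d over F_l (l odd): completing the square gives
  y^2 = x^3 + (b2/4) x^2 + (b4/2) x + b6/4; its twist by d is
  y^2 = x^3 + d (b2/4) x^2 + d^2 (b4/2) x + d^3 (b6/4).\<close>
definition weq_twist :: "int \<Rightarrow> int \<Rightarrow> int weq \<Rightarrow> int weq" where
  "weq_twist l d E = (case E of (a1, a2, a3, a4, a6) \<Rightarrow>
     (let b2 = a1 ^ 2 + 4 * a2; b4 = 2 * a4 + a1 * a3; b6 = a3 ^ 2 + 4 * a6;
          i2 = modular_inverse l 2; i4 = modular_inverse l 4
      in (0, (d * b2 * i4) mod l, 0, (d ^ 2 * b4 * i2) mod l, (d ^ 3 * b6 * i4) mod l)))"

end

theory Submission
  imports Defs
begin

lemma fermat_int:
  fixes l a :: int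
  assumes "prime l" "\<not> l dvd a"
  shows "[a ^ (nat l - 1) = 1] (mod l)"
proof -
  have l0: "l > 0" using assms(1) prime_gt_0_int by blast
  define b where "b = nat (a mod l)"
  have bint: "int b = a mod l" using l0 unfolding b_def by simp
  have pn: "prime (nat l)" using assms(1) l0 by (simp add: prime_nat_iff_prime)
  have "\<not> nat l dvd b"
  proof
    assume "nat l dvd b"
    then have "int (nat l) dvd int b" by (simp only: of_nat_dvd_iff)
    then have "l dvd a mod l" using l0 bint by simp
    then show False using assms(2) by (simp add: dvd_mod_iff)
  qed
  from fermat_theorem[OF pn this] have "[b ^ (nat l - 1) = 1] (mod nat l)" .
  then have "[int b ^ (nat l - 1) = 1] (mod int (nat l))"
    by (metis cong_int_iff of_nat_1 of_nat_power)
  then have c: "[(a mod l) ^ (nat l - 1) = 1] (mod l)" using l0 bint by simp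
  have "[a ^ (nat l - 1) = (a mod l) ^ (nat l - 1)] (mod l)"
    by (intro cong_pow) (simp add: cong_def)
  then show ?thesis using c by (rule cong_trans)
qed

lemma rat_red_cong:
  fixes l a b :: int
  assumes "coprime b l" "b \<noteq> 0"
  shows "[b * rat_red l (of_int a / of_int b) = a] (mod l)"
proof -
  obtain n d where nd: "quotient_of (of_int a / of_int b) = (n, d)" by (cases "quotient_of (of_int a / of_int b)") auto
  have d0: "d > 0" using quotient_of_denom_pos[OF nd] .
  have cnd: "coprime n d" using quotient_of_coprime[OF nd] .
  have "(of_int a / of_int b :: rat) = of_int n / of_int d" using quotient_of_div[OF nd] .
  then have eq: "a * d = n * b" using d0 assms(2)
    by (simp add: field_simps) (metis of_int_eq_iff of_int_mult)
  have "d dvd n * b" using eq by (metis dvd_triv_right)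
  then have "d dvd b" using cnd by (metis coprime_commute coprime_dvd_mult_right_iff)
  then obtain c where "b = d * c" by (elim dvdE)
  then have cdl: "coprime d l" using assms(1) by simp
  have rr: "rat_red l (of_int a / of_int b) = (n * modular_inverse l d) mod l"
    unfolding rat_red_def nd by simp
  have inv: "[d * modular_inverse l d = 1] (mod l)"
    using cdl by (intro cong_modular_inverse1) simp
  have "[rat_red l (of_int a / of_int b) = n * modular_inverse l d] (mod l)"
    unfolding rr by (simp add: cong_def)
  then have "[d * (b * rat_red l (of_int a / of_int b)) = d * (b * (n * modular_inverse l d))] (mod l)"
    by (intro cong_scalar_left)
  also have "d * (b * (n * modular_inverse l d)) = b * n * (d * modular_inverse l d)"
    by (simp add: ac_simps)
  also have "[b * n * (d * modular_inverse l d) = b * n * 1] (mod l)"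
    by (intro cong_scalar_left inv)
  also have "b * n * 1 = d * a" using eq by (simp add: ac_simps)
  finally show ?thesis using cdl by (simp add: cong_mult_lcancel)
qed

lemma coprime_2pow:
  fixes l :: int
  assumes "prime l" "l > 2"
  shows "coprime (2 ^ n) l"
proof -
  have "\<not> l dvd 2" using assms(2) by (auto dest: zdvd_imp_le)
  then have "coprime l 2" using assms(1) by (intro prime_imp_coprime)
  then have "coprime 2 l" by (simp only: coprime_commute)
  then show ?thesis by simp
qed

lemma coprime_4: "prime l \<Longrightarrow> l > 2 \<Longrightarrow> coprime 4 (l::int)"
  using coprime_2pow[of l 2] by simp
lemma coprime_2: "prime l \<Longrightarrow> l > 2 \<Longrightarrow> coprime 2 (l::int)"
  using coprime_2pow[of l 1] by simp
lemma coprime_64: "prime l \<Longrightarrow> l > 2 \<Longrightarrow> coprime 64 (l::int)"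
  using coprime_2pow[of l 6] by simp

lemma cond4:
  fixes l C1 x w v d Qa Qb E4 F4 H :: int
  assumes l: "prime l" "l > 2"
    and hE4: "[64 * E4 = C1^2 * x^2 + C1 * Qa] (mod l)"
    and hF4: "[64 * F4 = C1^2 * w^2 + C1 * Qb] (mod l)"
    and hx: "[x = w * (d * v^2)] (mod l)" and hQ: "Qa = Qb * (d * v^2)^2"
    and hH: "[H = d^2 * F4] (mod l)"
  shows "[v^4 * H = E4] (mod l)"
proof -
  have c64: "coprime 64 l" using coprime_64 l by blast
  have "[64 * (v^4 * H) = v^4 * d^2 * (64 * F4)] (mod l)"
    using cong_scalar_left[OF hH, of "64 * v^4"] by (simp add: ac_simps)
  also have "[v^4 * d^2 * (64 * F4) = v^4 * d^2 * (C1^2 * w^2 + C1 * Qb)] (mod l)"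
    by (intro cong_scalar_left hF4)
  also have "v^4 * d^2 * (C1^2 * w^2 + C1 * Qb) = C1^2 * (w * (d * v^2))^2 + C1 * Qa"
    unfolding hQ by (simp add: algebra_simps power2_eq_square power4_eq_xxxx)
  also have "[C1^2 * (w * (d * v^2))^2 + C1 * Qa = C1^2 * x^2 + C1 * Qa] (mod l)"
    by (intro cong_add cong_scalar_left cong_pow cong_sym[OF hx] cong_refl)
  also have "[C1^2 * x^2 + C1 * Qa = 64 * E4] (mod l)" by (rule cong_sym[OF hE4])
  finally show ?thesis using c64 by (simp add: cong_mult_lcancel)
qed

lemma iso_even:
  fixes l C1 x w v Qa Qb o1 E2 E4 F2 F4 :: int
  assumes l: "prime l" "l > 2" and v: "\<not> l dvd v"
    and h1: "[o1 = 1] (mod l)"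
    and hE2: "[4 * E2 = C1 * x - 1] (mod l)"
    and hE4: "[64 * E4 = C1^2 * x^2 + C1 * Qa] (mod l)"
    and hF2: "[4 * F2 = C1 * w - 1] (mod l)"
    and hF4: "[64 * F4 = C1^2 * w^2 + C1 * Qb] (mod l)"
    and hx: "[x = w * (1 * v^2)] (mod l)" and hQ: "Qa = Qb * (1 * v^2)^2"
  shows "weq_iso l (o1, E2, 0, E4, 0) (o1, F2, 0, F4, 0)"
proof -
  define h where "h = (l + 1) div 2"
  have "odd l" using coprime_2[OF l] by simp
  then have "even (l + 1)" by simp
  then have "2 * h = l + 1" unfolding h_def by (rule dvd_mult_div_cancel)
  then have h2: "[2 * h = 1] (mod l)" by (simp add: cong_def)
  define s where "s = (v - 1) * h"
  have s2: "[2 * s = v - 1] (mod l)"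
    using cong_scalar_left[OF h2, of "v - 1"] unfolding s_def by (simp add: ac_simps)
  have c1: "[v * o1 = o1 + 2 * s] (mod l)"
  proof -
    have "[v * o1 = v * 1] (mod l)" by (rule cong_scalar_left[OF h1])
    also have "v * 1 = 1 + (v - 1)" by simp
    also have "[1 + (v - 1) = o1 + 2 * s] (mod l)" by (rule cong_add[OF cong_sym[OF h1] cong_sym[OF s2]])
    finally show ?thesis .
  qed
  have c2: "[v^2 * F2 = E2 - s * o1 - s^2] (mod l)"
  proof -
    have "[4 * (v^2 * F2) = v^2 * (4 * F2)] (mod l)" by (simp add: ac_simps)
    also have "[v^2 * (4 * F2) = v^2 * (C1 * w - 1)] (mod l)" by (intro cong_scalar_left hF2)
    also have "v^2 * (C1 * w - 1) = C1 * (w * (1 * v^2)) - v^2" by (simp add: algebra_simps)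
    also have "[C1 * (w * (1 * v^2)) - v^2 = C1 * x - v^2] (mod l)"
      by (intro cong_diff cong_scalar_left cong_sym[OF hx] cong_refl)
    also have "C1 * x - v^2 = (C1 * x - 1) - 2 * (v - 1) * 1 - (v - 1)^2"
      by (simp add: algebra_simps power2_eq_square)
    also have "[(C1 * x - 1) - 2 * (v - 1) * 1 - (v - 1)^2 = 4 * E2 - 2 * (2 * s) * o1 - (2 * s)^2] (mod l)"
      by (intro cong_diff cong_mult cong_pow cong_sym[OF hE2] cong_sym[OF s2] cong_sym[OF h1] cong_refl)
    also have "4 * E2 - 2 * (2 * s) * o1 - (2 * s)^2 = 4 * (E2 - s * o1 - s^2)"
      by (simp add: algebra_simps power2_eq_square)
    finally show ?thesis using cong_mult_lcancel[OF coprime_4[OF l]] by blast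
  qed
  have c4: "[v^4 * F4 = E4] (mod l)"
    by (rule cond4[OF l hE4 hF4 hx hQ]) simp
  show ?thesis unfolding weq_iso_def
    apply (simp only: prod.case)
    apply (rule exI[of _ v])
    apply (rule exI[of _ 0])
    apply (rule exI[of _ s])
    apply (rule exI[of _ 0])
    apply (intro conjI v)
    using c1 c2 c4 by simp_all
qed

lemma iso_twist:
  fixes l C1 x w v d Qa Qb o1 E2 E4 F2 F4 :: int
  assumes l: "prime l" "l > 2" and v: "\<not> l dvd v"
    and h1: "[o1 = 1] (mod l)"
    and hE2: "[4 * E2 = C1 * x - 1] (mod l)"
    and hE4: "[64 * E4 = C1^2 * x^2 + C1 * Qa] (mod l)"
    and hF2: "[4 * F2 = C1 * w - 1] (mod l)"
    and hF4: "[64 * F4 = C1^2 * w^2 + C1 * Qb] (mod l)"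
    and hx: "[x = w * (d * v^2)] (mod l)" and hQ: "Qa = Qb * (d * v^2)^2"
  shows "weq_iso l (o1, E2, 0, E4, 0) (weq_twist l d (o1, F2, 0, F4, 0))"
proof -
  define h where "h = (l + 1) div 2"
  have "odd l" using coprime_2[OF l] by simp
  then have "even (l + 1)" by simp
  then have "2 * h = l + 1" unfolding h_def by (rule dvd_mult_div_cancel)
  then have h2: "[2 * h = 1] (mod l)" by (simp add: cong_def)
  define i4 where "i4 = modular_inverse l 4"
  define i2 where "i2 = modular_inverse l 2"
  have i4: "[4 * i4 = 1] (mod l)" unfolding i4_def
    using coprime_4[OF l] by (intro cong_modular_inverse1) simp
  have i2: "[2 * i2 = 1] (mod l)" unfolding i2_def
    using coprime_2[OF l] by (intro cong_modular_inverse1) simp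
  define G2 where "G2 = (d * (o1^2 + 4 * F2) * i4) mod l"
  define G4 where "G4 = (d^2 * (2 * F4) * i2) mod l"
  have tw: "weq_twist l d (o1, F2, 0, F4, 0) = (0, G2, 0, G4, 0)"
    unfolding weq_twist_def G2_def G4_def i4_def i2_def by (simp add: Let_def)
  have g2: "[4 * G2 = d * (C1 * w)] (mod l)"
  proof -
    have "[4 * G2 = 4 * (d * (o1^2 + 4 * F2) * i4)] (mod l)"
      unfolding G2_def by (intro cong_scalar_left) (simp add: cong_def)
    also have "4 * (d * (o1^2 + 4 * F2) * i4) = d * (o1^2 + 4 * F2) * (4 * i4)" by (simp add: ac_simps)
    also have "[d * (o1^2 + 4 * F2) * (4 * i4) = d * (1^2 + (C1 * w - 1)) * 1] (mod l)"
      by (intro cong_mult cong_add cong_pow h1 hF2 i4 cong_refl)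
    also have "d * (1^2 + (C1 * w - 1)) * 1 = d * (C1 * w)" by simp
    finally show ?thesis .
  qed
  have g4: "[G4 = d^2 * F4] (mod l)"
  proof -
    have "[2 * G4 = 2 * (d^2 * (2 * F4) * i2)] (mod l)"
      unfolding G4_def by (intro cong_scalar_left) (simp add: cong_def)
    also have "2 * (d^2 * (2 * F4) * i2) = d^2 * (2 * F4) * (2 * i2)" by (simp add: ac_simps)
    also have "[d^2 * (2 * F4) * (2 * i2) = d^2 * (2 * F4) * 1] (mod l)"
      by (intro cong_scalar_left i2)
    also have "d^2 * (2 * F4) * 1 = 2 * (d^2 * F4)" by simp
    finally show ?thesis using cong_mult_lcancel[OF coprime_2[OF l]] by blast
  qed
  have c1: "[v * 0 = o1 + 2 * (- h)] (mod l)"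
  proof -
    have "[o1 + 2 * (- h) = 1 + - 1] (mod l)"
      using cong_add[OF h1 cong_minus_minus_iff[THEN iffD2, OF h2]] by simp
    then show ?thesis by (simp add: cong_sym)
  qed
  have c2: "[v^2 * G2 = E2 - (- h) * o1 - (- h)^2] (mod l)"
  proof -
    have "[4 * (v^2 * G2) = v^2 * (4 * G2)] (mod l)" by (simp add: ac_simps)
    also have "[v^2 * (4 * G2) = v^2 * (d * (C1 * w))] (mod l)" by (intro cong_scalar_left g2)
    also have "v^2 * (d * (C1 * w)) = C1 * (w * (d * v^2))" by (simp add: algebra_simps)
    also have "[C1 * (w * (d * v^2)) = C1 * x] (mod l)"
      by (intro cong_scalar_left cong_sym[OF hx])
    also have "C1 * x = (C1 * x - 1) + 2 * 1 * 1 - 1^2"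
      by (simp add: algebra_simps power2_eq_square)
    also have "[(C1 * x - 1) + 2 * 1 * 1 - 1^2 = 4 * E2 + 2 * (2 * h) * o1 - (2 * h)^2] (mod l)"
      by (intro cong_diff cong_add cong_mult cong_pow cong_sym[OF hE2] cong_sym[OF h2] cong_sym[OF h1] cong_refl)
    also have "4 * E2 + 2 * (2 * h) * o1 - (2 * h)^2 = 4 * (E2 - (- h) * o1 - (- h)^2)"
      by (simp add: algebra_simps power2_eq_square)
    finally show ?thesis using cong_mult_lcancel[OF coprime_4[OF l]] by blast
  qed
  have c4: "[v^4 * G4 = E4] (mod l)"
    by (rule cond4[OF l hE4 hF4 hx hQ g4])
  show ?thesis unfolding tw weq_iso_def
    apply (simp only: prod.case)
    apply (rule exI[of _ v])
    apply (rule exI[of _ 0])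
    apply (rule exI[of _ "- h"])
    apply (rule exI[of _ 0])
    apply (intro conjI v)
    using c1 c2 c4 apply simp_all
    done
qed

lemma red_F:
  "weq_red l (F_curve C1 q x a) =
    (rat_red l (of_int 1 / of_int 1), rat_red l (of_int (C1 * x - 1) / of_int 4), 0,
     rat_red l (of_int (C1^2 * x^2 + C1 * q^a) / of_int 64), 0)"
  by (simp add: weq_red_def F_curve_def rat_red_def)

theorem lemma7p1:
  fixes C1 q x y l :: int and \<alpha> p m :: nat
  assumes "C1 > 0" and "squarefree C1" and "prime q"
    and "C1 * x ^ 2 + q ^ \<alpha> = y ^ p"
    and "gcd (gcd (C1 * x) q) y = 1"
    and "x > 0" and "y > 0" and "\<alpha> > 0"
    and "even y" and "prime p" and "p \<ge> 11"
    and "prime l" and "m > 0" and "l = 2 * int m * int p + 1"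
    and "\<not> l dvd 2 * q * C1 * y"
  shows "\<exists>\<omega>\<in>{0..l - 1}.
           [(C1 * \<omega> ^ 2 + q ^ (\<alpha> mod (2 * p))) ^ (2 * m) = 1] (mod l) \<and>
           (weq_iso l (weq_red l (F_curve C1 q x \<alpha>))
                      (weq_red l (F_curve C1 q \<omega> (\<alpha> mod (2 * p)))) \<or>
            weq_iso l (weq_red l (F_curve C1 q x \<alpha>))
                      (weq_twist l q (weq_red l (F_curve C1 q \<omega> (\<alpha> mod (2 * p))))))"
proof -
  note lp = \<open>prime l\<close>
  have p11: "p \<ge> 11" by fact
  have "1 * 11 \<le> m * p" using \<open>m > 0\<close> p11 by (intro mult_le_mono) auto
  then have "int (m * p) \<ge> 11" by linarith
  then have l2: "l > 2" using \<open>l = _\<close> by simp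
  have l: "prime l" "l > 2" using lp l2 by auto
  have nq: "\<not> l dvd q" and ny: "\<not> l dvd y"
    using assms(15) by (auto intro: dvd_mult_left dvd_mult)
  have natl: "nat l - 1 = 2 * m * p" using \<open>l = _\<close> by (simp add: nat_add_distrib nat_mult_distrib)
  define k where "k = \<alpha> div (2 * p)"
  define \<beta> where "\<beta> = \<alpha> mod (2 * p)"
  have ak: "\<alpha> = \<beta> + 2 * p * k" unfolding k_def \<beta>_def by simp
  define t where "t = q ^ (p * k)"
  have qa: "q ^ \<alpha> = q ^ \<beta> * t^2"
    unfolding t_def ak by (simp add: power_add power_mult[symmetric] ac_simps)
  have nqn: "\<And>n. \<not> l dvd q ^ n"
    using nq lp by (metis prime_dvd_power)
  have ct: "coprime t l" unfolding t_def
    using nqn lp by (metis coprime_commute prime_imp_coprime)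
  define \<omega> where "\<omega> = (x * modular_inverse l t) mod l"
  have \<omega>r: "\<omega> \<in> {0..l - 1}" unfolding \<omega>_def using l2 by auto
  have hx: "[x = \<omega> * t] (mod l)"
  proof -
    have "[\<omega> * t = x * modular_inverse l t * t] (mod l)"
      unfolding \<omega>_def by (intro cong_scalar_right) (simp add: cong_def)
    also have "x * modular_inverse l t * t = x * (t * modular_inverse l t)" by (simp add: ac_simps)
    also have "[x * (t * modular_inverse l t) = x * 1] (mod l)"
      by (intro cong_scalar_left cong_modular_inverse1 ct)
    finally show ?thesis by (simp add: cong_sym)
  qed
  have cond1: "[(C1 * \<omega> ^ 2 + q ^ \<beta>) ^ (2 * m) = 1] (mod l)"
  proof -
    define Z where "Z = C1 * \<omega> ^ 2 + q ^ \<beta>"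
    have "[t^2 * Z = C1 * (\<omega> * t)^2 + q ^ \<alpha>] (mod l)"
      unfolding Z_def qa by (simp add: algebra_simps power2_eq_square)
    also have "[C1 * (\<omega> * t)^2 + q ^ \<alpha> = C1 * x^2 + q ^ \<alpha>] (mod l)"
      by (intro cong_add cong_scalar_left cong_pow cong_sym[OF hx] cong_refl)
    also have "C1 * x^2 + q ^ \<alpha> = y ^ p" by fact
    finally have "[(t^2 * Z)^(2*m) = (y^p)^(2*m)] (mod l)" by (rule cong_pow)
    also have "(y^p)^(2*m) = y ^ (nat l - 1)" unfolding natl by (simp add: power_mult[symmetric] ac_simps)
    also have "[y ^ (nat l - 1) = 1] (mod l)" by (rule fermat_int[OF lp ny])
    finally have A: "[(t^2)^(2*m) * Z^(2*m) = 1] (mod l)" by (simp add: power_mult_distrib)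
    have "(t^2)^(2*m) = (q ^ (nat l - 1)) ^ (2 * k)"
      unfolding t_def natl by (simp add: power_mult[symmetric] ac_simps)
    also have "[(q ^ (nat l - 1)) ^ (2 * k) = 1 ^ (2 * k)] (mod l)"
      by (intro cong_pow fermat_int[OF lp nq])
    finally have B: "[(t^2)^(2*m) = 1] (mod l)" by simp
    have "[1 * Z^(2*m) = (t^2)^(2*m) * Z^(2*m)] (mod l)"
      by (intro cong_scalar_right cong_sym[OF B])
    also note A
    finally show ?thesis unfolding Z_def by simp
  qed
  have c4: "coprime 4 l" and c64: "coprime 64 l" using coprime_4[OF l] coprime_64[OF l] by auto
  have h1: "[rat_red l (of_int 1 / of_int 1) = 1] (mod l)"
    using rat_red_cong[of 1 l 1] by simp
  have hE2: "[4 * rat_red l (of_int (C1 * x - 1) / of_int 4) = C1 * x - 1] (mod l)"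
    by (rule rat_red_cong[OF c4]) simp
  have hE4: "[64 * rat_red l (of_int (C1^2 * x^2 + C1 * q^\<alpha>) / of_int 64) = C1^2 * x^2 + C1 * q^\<alpha>] (mod l)"
    by (rule rat_red_cong[OF c64]) simp
  have hF2: "[4 * rat_red l (of_int (C1 * \<omega> - 1) / of_int 4) = C1 * \<omega> - 1] (mod l)"
    by (rule rat_red_cong[OF c4]) simp
  have hF4: "[64 * rat_red l (of_int (C1^2 * \<omega>^2 + C1 * q^\<beta>) / of_int 64) = C1^2 * \<omega>^2 + C1 * q^\<beta>] (mod l)"
    by (rule rat_red_cong[OF c64]) simp
  define v where "v = q ^ (p * k div 2)"
  have nv: "\<not> l dvd v" unfolding v_def by (rule nqn)
  have iso: "weq_iso l (weq_red l (F_curve C1 q x \<alpha>)) (weq_red l (F_curve C1 q \<omega> \<beta>)) \<or>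
      weq_iso l (weq_red l (F_curve C1 q x \<alpha>)) (weq_twist l q (weq_red l (F_curve C1 q \<omega> \<beta>)))"
  proof (cases "even (p * k)")
    case True
    then have "p * k = 2 * (p * k div 2)" by simp
    then have tv: "t = 1 * v^2" unfolding t_def v_def
      by (metis mult_1 power_even_eq)
    have a1: "[x = \<omega> * (1 * v^2)] (mod l)" using hx unfolding tv .
    have a2: "q ^ \<alpha> = q ^ \<beta> * (1 * v^2)^2" using qa unfolding tv .
    show ?thesis unfolding red_F
      by (rule disjI1, rule iso_even[OF l nv h1 hE2 hE4 hF2 hF4 a1 a2])
  next
    case False
    then have "p * k = Suc (2 * (p * k div 2))" by presburger
    then have tv: "t = q * v^2" unfolding t_def v_def
      by (metis power_Suc power_even_eq)
    have a1: "[x = \<omega> * (q * v^2)] (mod l)" using hx unfolding tv .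
    have a2: "q ^ \<alpha> = q ^ \<beta> * (q * v^2)^2" using qa unfolding tv .
    show ?thesis unfolding red_F
      by (rule disjI2, rule iso_twist[OF l nv h1 hE2 hE4 hF2 hF4 a1 a2])
  qed
  show ?thesis using \<omega>r cond1 iso unfolding \<beta>_def by blast
qed

end
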